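(* Let $A$ be a physical system of dimension $m$ whose Hamiltonian has a non-degenerate Bohr spectrum, with energy eigenbasis $\{|x\rangle\}$, and let $\gamma^A$ be its Gibbs state, with diagonal vector $\mathbf{g}$. Let $\rho=\sum_{x,y}r_{xy}|x\rangle\langle y|$ and $\sigma=\sum_{x,y}s_{xy}|x\rangle\langle y|$ be states on $A$ with $r_{xy}\neq0$ for all $x\neq y$, and let $\mathbf{r}=(r_{xx})_x$, $\mathbf{s}=(s_{xx})_x$. Then there exists $\mathcal{E}\in\mathrm{GPC}(A\to A)$ with $\mathcal{E}(\rho)=\sigma$ if and only if there exists an $m\times m$ column stochastic matrix $P=(p_{y|x})$ (entry in row $y$, column $x$) such that $P\mathbf{r}=\mathbf{s}$, $P\mathbf{g}=\mathbf{g}$, and $$\sum_{x=1}^m p_{x|x}|x\rangle\langle x|+\sum_{x\neq y\in[m]}\frac{s_{xy}}{r_{xy}}|x\rangle\langle y|\geq0.$$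
   Context: The Hamiltonian $H^A=\sum_x a_x|x\rangle\langle x|$ has a non-degenerate Bohr spectrum if for all $x,y,x',y'$: $a_x-a_y=a_{x'}-a_{y'}$ holds iff ($x=x'$ and $y=y'$) or ($x=y$ and $x'=y'$). For fixed inverse temperature $\beta>0$ the Gibbs state is $\gamma^A=e^{-\beta H^A}/\mathrm{Tr}[e^{-\beta H^A}]$. $\mathrm{GPC}(A\to A)$ is the set of quantum channels $\mathcal{E}:A\to A$ with $\mathcal{E}(\gamma^A)=\gamma^A$ and $\mathcal{E}(e^{-iH^At}\rho e^{iH^At})=e^{-iH^At}\mathcal{E}(\rho)e^{iH^At}$ for all $t\in\mathbb{R}$ and states $\rho$. *)

theory Defs
  imports Complex_Main
begin

text \<open>Operators on the system A are represented as matrices in the energy eigenbasis,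
  indexed by a finite type 'a (so the dimension is m = CARD('a)).
  An operator X is the function X x y = <x|X|y>.\<close>

type_synonym 'a op = "'a \<Rightarrow> 'a \<Rightarrow> complex"

definition psd_on :: "'i set \<Rightarrow> ('i \<Rightarrow> 'i \<Rightarrow> complex) \<Rightarrow> bool" where
  "psd_on I M \<longleftrightarrow>
     (\<forall>x\<in>I. \<forall>y\<in>I. M y x = cnj (M x y)) \<and>
     (\<forall>v :: 'i \<Rightarrow> complex. 0 \<le> Re (\<Sum>x\<in>I. \<Sum>y\<in>I. cnj (v x) * M x y * v y))"

definition psd :: "('a::finite) op \<Rightarrow> bool" where
  "psd M \<longleftrightarrow> psd_on UNIV M"

definition trace :: "('a::finite) op \<Rightarrow> complex" where
  "trace M = (\<Sum>x\<in>UNIV. M x x)"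

definition is_state :: "('a::finite) op \<Rightarrow> bool" where
  "is_state \<rho> \<longleftrightarrow> psd \<rho> \<and> trace \<rho> = 1"

definition clinear_map :: "(('a::finite) op \<Rightarrow> 'a op) \<Rightarrow> bool" where
  "clinear_map E \<longleftrightarrow>
     (\<forall>c X Y. E (\<lambda>x y. c * X x y + Y x y) = (\<lambda>x y. c * E X x y + E Y x y))"

text \<open>Complete positivity: for every ancilla dimension k, id_k \<otimes> E is positive.
  Operators on C^k \<otimes> A are matrices indexed by {..<k} \<times> 'a; (id \<otimes> E) acts blockwise.\<close>
definition completely_positive :: "(('a::finite) op \<Rightarrow> 'a op) \<Rightarrow> bool" where
  "completely_positive E \<longleftrightarrow>
     (\<forall>k::nat. \<forall>X :: (nat \<times> 'a) \<Rightarrow> (nat \<times> 'a) \<Rightarrow> complex.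
        psd_on ({..<k} \<times> UNIV) X \<longrightarrow>
        psd_on ({..<k} \<times> UNIV)
          (\<lambda>(i, x) (j, y). E (\<lambda>x' y'. X (i, x') (j, y')) x y))"

definition trace_preserving :: "(('a::finite) op \<Rightarrow> 'a op) \<Rightarrow> bool" where
  "trace_preserving E \<longleftrightarrow> (\<forall>X. trace (E X) = trace X)"

definition quantum_channel :: "(('a::finite) op \<Rightarrow> 'a op) \<Rightarrow> bool" where
  "quantum_channel E \<longleftrightarrow> clinear_map E \<and> completely_positive E \<and> trace_preserving E"

text \<open>Hamiltonian H = \<Sum>_x a x |x><x|.\<close>
definition nondegenerate_bohr :: "('a \<Rightarrow> real) \<Rightarrow> bool" where
  "nondegenerate_bohr a \<longleftrightarrow>
     (\<forall>x y x' y'. a x - a y = a x' - a y' \<longleftrightarrow> (x = x' \<and> y = y') \<or> (x = y \<and> x' = y'))"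

definition gibbs_vec :: "real \<Rightarrow> (('a::finite) \<Rightarrow> real) \<Rightarrow> 'a \<Rightarrow> real" where
  "gibbs_vec \<beta> a x = exp (- \<beta> * a x) / (\<Sum>y\<in>UNIV. exp (- \<beta> * a y))"

definition gibbs_state :: "real \<Rightarrow> (('a::finite) \<Rightarrow> real) \<Rightarrow> 'a op" where
  "gibbs_state \<beta> a = (\<lambda>x y. if x = y then complex_of_real (gibbs_vec \<beta> a x) else 0)"

definition time_evol :: "('a \<Rightarrow> real) \<Rightarrow> real \<Rightarrow> 'a op \<Rightarrow> 'a op" where
  "time_evol a t X = (\<lambda>x y. cis (- (a x * t)) * X x y * cis (a y * t))"

definition GPC :: "real \<Rightarrow> (('a::finite) \<Rightarrow> real) \<Rightarrow> ('a op \<Rightarrow> 'a op) \<Rightarrow> bool" where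
  "GPC \<beta> a E \<longleftrightarrow> quantum_channel E \<and> E (gibbs_state \<beta> a) = gibbs_state \<beta> a \<and>
     (\<forall>t::real. \<forall>\<rho>. is_state \<rho> \<longrightarrow> E (time_evol a t \<rho>) = time_evol a t (E \<rho>))"

text \<open>Column stochastic: P y x is the entry in row y, column x.\<close>
definition column_stochastic :: "(('a::finite) \<Rightarrow> 'a \<Rightarrow> real) \<Rightarrow> bool" where
  "column_stochastic P \<longleftrightarrow> (\<forall>x y. 0 \<le> P y x) \<and> (\<forall>x. (\<Sum>y\<in>UNIV. P y x) = 1)"

end

theory Submission
  imports Defs
begin


definition qform :: "'i set \<Rightarrow> ('i \<Rightarrow> 'i \<Rightarrow> complex) \<Rightarrow> ('i \<Rightarrow> complex) \<Rightarrow> complex" where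
  "qform I M v = (\<Sum>x\<in>I. \<Sum>y\<in>I. cnj (v x) * M x y * v y)"

lemma psd_on_iff: "psd_on I M \<longleftrightarrow> (\<forall>x\<in>I. \<forall>y\<in>I. M y x = cnj (M x y)) \<and> (\<forall>v. 0 \<le> Re (qform I M v))"
  by (simp add: psd_on_def qform_def)

lemma qform_support:
  assumes "finite I" "S \<subseteq> I" "\<forall>x\<in>I-S. v x = 0"
  shows "qform I M v = qform S M v"
proof -
  have "qform I M v = (\<Sum>x\<in>S. \<Sum>y\<in>I. cnj (v x) * M x y * v y)"
    unfolding qform_def using assms by (intro sum.mono_neutral_right) auto
  also have "\<dots> = qform S M v"
    unfolding qform_def
  proof (rule sum.cong[OF refl])
    fix x assume "x \<in> S"
    show "(\<Sum>y\<in>I. cnj (v x) * M x y * v y) = (\<Sum>y\<in>S. cnj (v x) * M x y * v y)"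
      using assms by (intro sum.mono_neutral_right) auto
  qed
  finally show ?thesis .
qed

lemma psd_decomp:
  assumes "finite I" "psd_on I M"
  shows "\<exists>n (c::nat\<Rightarrow>real) U. (\<forall>l. 0 \<le> c l) \<and>
     (\<forall>x\<in>I. \<forall>y\<in>I. M x y = (\<Sum>l<n. of_real (c l) * cnj (U l x) * U l y))"
  using assms
proof (induction I arbitrary: M rule: finite_induct)
  case empty
  then show ?case by auto
next
  case (insert z I)
  have herm: "\<And>x y. x\<in>insert z I \<Longrightarrow> y\<in>insert z I \<Longrightarrow> M y x = cnj (M x y)"
    and form: "\<And>v. 0 \<le> Re (qform (insert z I) M v)"
    using insert.prems by (auto simp: psd_on_iff)
  define d where "d = Re (M z z)"
  have Mzz: "M z z = of_real d"
  proof -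
    have "M z z = cnj (M z z)" using herm[of z z] by simp
    then have "Im (M z z) = 0" by (simp add: complex_eq_iff)
    then show ?thesis by (simp add: complex_eq_iff d_def)
  qed
  have d0: "d \<ge> 0"
  proof -
    have "qform (insert z I) M (\<lambda>x. if x = z then 1 else 0) = qform {z} M (\<lambda>x. if x = z then 1 else 0)"
      by (rule qform_support) (use insert in auto)
    also have "\<dots> = M z z" by (simp add: qform_def)
    finally show ?thesis using form[of "\<lambda>x. if x = z then 1 else 0"] Mzz by simp
  qed
  have zero_row: "M z y = 0" if "d = 0" "y \<in> insert z I" for y
  proof (cases "y = z")
    case True then show ?thesis using Mzz that by simp
  next
    case False
    show ?thesis
    proof (rule ccontr)
      assume b: "M z y \<noteq> 0"
      define b where "b = M z y"
      define r where "r = (\<bar>Re (M y y)\<bar> + 1) / (2 * (cmod b)^2)"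
      have rpos: "r * (2 * (cmod b)^2) = \<bar>Re (M y y)\<bar> + 1"
        unfolding r_def b_def using b by simp
      define v where "v = (\<lambda>x. if x = z then - of_real r * b else if x = y then 1 else 0)"
      have "qform (insert z I) M v = qform {z, y} M v"
        by (rule qform_support) (use insert that in \<open>auto simp: v_def\<close>)
      also have "\<dots> = cnj (- of_real r * b) * M z y + M y z * (- of_real r * b) + M y y"
        using False Mzz that by (simp add: qform_def v_def)
      also have "\<dots> = - of_real r * (b * cnj b + b * cnj b) + M y y"
        using herm[of z y] that False unfolding b_def by (simp add: algebra_simps)
      also have "\<dots> = - of_real (2 * r * (cmod b)^2) + M y y"
        by (simp add: complex_norm_square[symmetric])
      finally have "Re (qform (insert z I) M v) = - 2 * r * (cmod b)^2 + Re (M y y)"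
        by simp
      with form[of v] rpos show False by (simp add: algebra_simps)
    qed
  qed
  define M' where "M' = (\<lambda>x y. M x y - M x z * M z y / of_real d)"
  have "psd_on I M'"
    unfolding psd_on_iff
  proof (intro conjI ballI allI)
    fix x y assume "x \<in> I" "y \<in> I"
    then show "M' y x = cnj (M' x y)"
      using herm[of x y] herm[of z y] herm[of x z] by (simp add: M'_def)
  next
    fix v
    define s where "s = (\<Sum>y\<in>I. M z y * v y)"
    define t where "t = (\<Sum>x\<in>I. cnj (v x) * M x z)"
    have hz: "cnj (M z y) = M y z" if "y \<in> I" for y
      using herm[of z y] that by auto
    have ts: "t = cnj s"
    proof -
      have "cnj s = (\<Sum>y\<in>I. cnj (M z y) * cnj (v y))" unfolding s_def by simp
      also have "\<dots> = (\<Sum>y\<in>I. cnj (v y) * M y z)"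
        by (rule sum.cong[OF refl]) (simp add: hz)
      finally show ?thesis unfolding t_def by simp
    qed
    define c where "c = - s / of_real d"
    define v' where "v' = v(z := c)"
    have v'I: "\<And>x. x \<in> I \<Longrightarrow> v' x = v x" using insert.hyps by (auto simp: v'_def)
    have "qform (insert z I) M v' = cnj c * M z z * c + cnj c * s + t * c + qform I M v"
    proof -
      have "qform (insert z I) M v' = (\<Sum>y\<in>insert z I. cnj (v' z) * M z y * v' y)
          + (\<Sum>x\<in>I. \<Sum>y\<in>insert z I. cnj (v' x) * M x y * v' y)"
        unfolding qform_def using insert.hyps by simp
      also have "(\<Sum>y\<in>insert z I. cnj (v' z) * M z y * v' y) = cnj c * M z z * c + cnj c * s"
        using insert.hyps v'I by (simp add: s_def sum_distrib_left v'_def mult.assoc)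
      also have "(\<Sum>x\<in>I. \<Sum>y\<in>insert z I. cnj (v' x) * M x y * v' y)
          = (\<Sum>x\<in>I. cnj (v x) * M x z * c) + qform I M v"
        using insert.hyps v'I by (simp add: qform_def sum.distrib v'_def)
      also have "(\<Sum>x\<in>I. cnj (v x) * M x z * c) = t * c"
        by (simp add: t_def sum_distrib_right)
      finally show ?thesis by simp
    qed
    also have "\<dots> = qform I M v - t * s / of_real d"
    proof (cases "d = 0")
      case True then show ?thesis by (simp add: c_def)
    next
      case False
      then have dn: "(of_real d :: complex) \<noteq> 0" by simp
      have cc: "cnj c = - t / of_real d" unfolding c_def ts by simp
      show ?thesis unfolding cc Mzz unfolding c_def using dn
        by (simp add: field_simps power2_eq_square)
    qed
    also have "\<dots> = qform I M' v"
    proof -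
      have "qform I M' v = qform I M v - (\<Sum>x\<in>I. \<Sum>y\<in>I. cnj (v x) * M x z * (M z y * v y) / of_real d)"
        unfolding qform_def M'_def by (simp add: sum_subtractf algebra_simps)
      also have "(\<Sum>x\<in>I. \<Sum>y\<in>I. cnj (v x) * M x z * (M z y * v y) / of_real d) = t * s / of_real d"
        unfolding t_def s_def sum_product sum_divide_distrib by (simp add: mult.assoc)
      finally show ?thesis by simp
    qed
    finally show "0 \<le> Re (qform I M' v)" using form[of v'] by simp
  qed
  then obtain n and c :: "nat \<Rightarrow> real" and U where c: "\<forall>l. 0 \<le> c l"
    and U: "\<forall>x\<in>I. \<forall>y\<in>I. M' x y = (\<Sum>l<n. of_real (c l) * cnj (U l x) * U l y)"
    using insert.IH by blast
  have M'z1: "M' z y = 0" if "y \<in> insert z I" for y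
    using zero_row[OF _ that] Mzz d0 unfolding M'_def by (cases "d = 0") auto
  have M'z2: "M' x z = 0" if "x \<in> insert z I" for x
    using zero_row[OF _ that] Mzz d0 herm[OF that, of z] unfolding M'_def by (cases "d = 0") auto
  define c' where "c' = c(n := 1 / d)"
  define U' where "U' = (\<lambda>l x. if l < n then (if x = z then 0 else U l x) else M z x)"
  have "M x y = (\<Sum>l<Suc n. of_real (c' l) * cnj (U' l x) * U' l y)"
    if "x \<in> insert z I" "y \<in> insert z I" for x y
  proof -
    have "M x y = M' x y + of_real (c' n) * cnj (U' n x) * U' n y"
      using herm[of z x] that by (simp add: M'_def c'_def U'_def)
    moreover have "M' x y = (\<Sum>l<n. of_real (c' l) * cnj (U' l x) * U' l y)"
    proof (cases "x = z \<or> y = z")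
      case True then show ?thesis using M'z1 M'z2 that by (auto simp: U'_def)
    next
      case False then show ?thesis using U that insert.hyps by (auto simp: U'_def c'_def)
    qed
    ultimately show ?thesis by simp
  qed
  moreover have "\<forall>l. 0 \<le> c' l" using c d0 by (simp add: c'_def)
  ultimately show ?case by blast
qed

lemma sum_prod_split: "(\<Sum>p\<in>A\<times>B. G p) = (\<Sum>i\<in>A. \<Sum>x\<in>B. G (i, x))"
  by (simp add: sum.cartesian_product)

lemma qform_prod:
  "qform ({..<k} \<times> (UNIV::'a::finite set)) X v =
    (\<Sum>i<k. \<Sum>x\<in>UNIV. \<Sum>j<k. \<Sum>y\<in>UNIV. cnj (v (i,x)) * X (i,x) (j,y) * v (j,y))"
  unfolding qform_def sum_prod_split ..

lemma rank_one_psd_on: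
  fixes f :: "'i \<Rightarrow> complex"
  assumes "r \<ge> 0"
  shows "psd_on I (\<lambda>u w. of_real r * cnj (f u) * f w)"
proof -
  have "Re (qform I (\<lambda>u w. of_real r * cnj (f u) * f w) v) \<ge> 0" for v
  proof -
    define S where "S = (\<Sum>w\<in>I. f w * v w)"
    have "qform I (\<lambda>u w. of_real r * cnj (f u) * f w) v = of_real r * (cnj S * S)"
      unfolding qform_def S_def
      by (simp add: sum_distrib_left sum_distrib_right algebra_simps)
    also have "\<dots> = of_real (r * (cmod S)^2)"
      using complex_norm_square[of S] by (simp add: mult.commute)
    finally show ?thesis using assms by simp
  qed
  then show ?thesis unfolding psd_on_iff by auto
qed

lemma rank_one_psd:
  fixes f :: "'a::finite \<Rightarrow> complex"
  assumes "r \<ge> 0"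
  shows "psd (\<lambda>u w. of_real r * cnj (f u) * f w)"
  using rank_one_psd_on[OF assms] unfolding psd_def .



definition eu :: "'a \<Rightarrow> 'a \<Rightarrow> 'a \<Rightarrow> 'a \<Rightarrow> complex" where
  "eu x y = (\<lambda>u w. if u = x \<and> w = y then 1 else 0)"

lemma lin_comb: "clinear_map E \<Longrightarrow> E (\<lambda>x y. c * X x y + Y x y) = (\<lambda>x y. c * E X x y + E Y x y)"
  by (simp add: clinear_map_def)

lemma lin_zero: assumes "clinear_map E" shows "E (\<lambda>x y. 0) = (\<lambda>x y. 0)"
  using lin_comb[OF assms, of "-1" "\<lambda>x y. 0" "\<lambda>x y. 0"] by simp

lemma lin_scale: assumes "clinear_map E" shows "E (\<lambda>x y. c * X x y) = (\<lambda>x y. c * E X x y)"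
  using lin_comb[OF assms, of c X "\<lambda>x y. 0"] lin_zero[OF assms] by simp

lemma lin_add: assumes "clinear_map E" shows "E (\<lambda>x y. X x y + Y x y) = (\<lambda>x y. E X x y + E Y x y)"
  using lin_comb[OF assms, of 1 X Y] by simp

lemma lin_sum:
  assumes "clinear_map E" "finite S"
  shows "E (\<lambda>x y. \<Sum>i\<in>S. f i x y) = (\<lambda>x y. \<Sum>i\<in>S. E (f i) x y)"
  using assms(2)
proof (induction S rule: finite_induct)
  case empty then show ?case using lin_zero[OF assms(1)] by simp
next
  case (insert i S)
  have "E (\<lambda>x y. \<Sum>i\<in>insert i S. f i x y) = E (\<lambda>x y. f i x y + (\<Sum>i\<in>S. f i x y))"
    using insert.hyps by simp
  also have "\<dots> = (\<lambda>x y. E (f i) x y + E (\<lambda>x y. \<Sum>i\<in>S. f i x y) x y)"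
    using lin_add[OF assms(1), of "f i" "\<lambda>x y. \<Sum>i\<in>S. f i x y"] by simp
  finally show ?case using insert by simp
qed

lemma expand_eu: "X = (\<lambda>u w. \<Sum>x\<in>UNIV. \<Sum>y\<in>UNIV. X x y * eu x y u w)"
  for X :: "('a::finite) op"
proof (intro ext)
  fix u w
  have "(\<Sum>x\<in>UNIV. \<Sum>y\<in>UNIV. X x y * eu x y u w) = (\<Sum>x\<in>UNIV. if x = u then X u w else 0)"
    by (rule sum.cong[OF refl]) (auto simp: eu_def if_distrib cong: if_cong)
  then show "X u w = (\<Sum>x\<in>UNIV. \<Sum>y\<in>UNIV. X x y * eu x y u w)" by simp
qed

lemma E_expand:
  fixes E :: "('a::finite) op \<Rightarrow> 'a op"
  assumes "clinear_map E"
  shows "E X u w = (\<Sum>x\<in>UNIV. \<Sum>y\<in>UNIV. X x y * E (eu x y) u w)"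
proof -
  have "E X = E (\<lambda>u w. \<Sum>x\<in>UNIV. \<Sum>y\<in>UNIV. X x y * eu x y u w)"
    by (subst expand_eu[of X]) simp
  also have "\<dots> = (\<lambda>u w. \<Sum>x\<in>UNIV. E (\<lambda>u w. \<Sum>y\<in>UNIV. X x y * eu x y u w) u w)"
    by (rule lin_sum[OF assms]) simp
  also have "\<dots> = (\<lambda>u w. \<Sum>x\<in>UNIV. \<Sum>y\<in>UNIV. E (\<lambda>u w. X x y * eu x y u w) u w)"
    by (simp add: lin_sum[OF assms])
  also have "\<dots> = (\<lambda>u w. \<Sum>x\<in>UNIV. \<Sum>y\<in>UNIV. X x y * E (eu x y) u w)"
    by (simp add: lin_scale[OF assms])
  finally show ?thesis by simp
qed

lemma time_evol_comb:
  "time_evol a t (\<lambda>x y. c * X x y + Y x y) = (\<lambda>x y. c * time_evol a t X x y + time_evol a t Y x y)"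
  by (simp add: time_evol_def algebra_simps)

lemma time_evol_eu:
  "time_evol a t (eu z z') = (\<lambda>u w. (cis (- (a z * t)) * cis (a z' * t)) * eu z z' u w)"
  by (auto simp: time_evol_def eu_def fun_eq_iff)

definition cov :: "('a \<Rightarrow> real) \<Rightarrow> ('a op \<Rightarrow> 'a op) \<Rightarrow> 'a op \<Rightarrow> bool" where
  "cov a E X \<longleftrightarrow> (\<forall>t. E (time_evol a t X) = time_evol a t (E X))"

lemma cov_comb:
  assumes "clinear_map E" "cov a E X" "cov a E Y"
  shows "cov a E (\<lambda>x y. c * X x y + Y x y)"
  using assms unfolding cov_def by (simp add: time_evol_comb lin_comb)

lemma cov_zero:
  assumes "clinear_map E" shows "cov a E (\<lambda>x y. 0)"
  using lin_zero[OF assms] unfolding cov_def by (simp add: time_evol_def)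

lemma rank_one_state:
  fixes f :: "'a::finite \<Rightarrow> complex"
  assumes "r \<ge> 0" "(\<Sum>u\<in>UNIV. of_real r * cnj (f u) * f u) = 1"
  shows "is_state (\<lambda>u w. of_real r * cnj (f u) * f w)"
  using rank_one_psd[OF assms(1)] assms(2) unfolding is_state_def trace_def by simp



lemma cov_state: "GPC \<beta> a E \<Longrightarrow> is_state \<rho> \<Longrightarrow> cov a E \<rho>"
  by (simp add: GPC_def cov_def)

lemma cov_eu:
  fixes E :: "('a::finite) op \<Rightarrow> 'a op"
  assumes G: "GPC \<beta> a E"
  shows "cov a E (eu x y)"
proof -
  have lin: "clinear_map E" using G by (simp add: GPC_def quantum_channel_def)
  define ind where "ind = (\<lambda>z (u::'a). if u = z then (1::complex) else 0)"
  have indsum: "(\<Sum>u\<in>UNIV. of_real 1 * cnj (ind z u) * ind z u) = 1" for z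
  proof -
    have "(\<Sum>u\<in>UNIV. of_real 1 * cnj (ind z u) * ind z u) = (\<Sum>u\<in>UNIV. if u = z then 1 else 0)"
      by (rule sum.cong) (auto simp: ind_def)
    then show ?thesis by simp
  qed
  have Rz: "cov a E (\<lambda>u w. of_real 1 * cnj (ind z u) * ind z w)" for z
    by (rule cov_state[OF G], rule rank_one_state) (use indsum in auto)
  have euz: "eu z z = (\<lambda>u w. of_real 1 * cnj (ind z u) * ind z w)" for z
    by (auto simp: eu_def ind_def fun_eq_iff)
  show ?thesis
  proof (cases "x = y")
    case True then show ?thesis using Rz euz by simp
  next
    case False
    define f1 where "f1 = (\<lambda>u. ind x u + ind y u)"
    define f2 where "f2 = (\<lambda>u. ind x u + \<i> * ind y u)"
    have sum2: "(\<Sum>u\<in>UNIV. g u) = g x + g y" if "\<And>u. u \<noteq> x \<Longrightarrow> u \<noteq> y \<Longrightarrow> g u = 0"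
      for g :: "'a \<Rightarrow> complex"
    proof -
      have "(\<Sum>u\<in>UNIV. g u) = (\<Sum>u\<in>{x,y}. g u)"
        using that by (intro sum.mono_neutral_right) auto
      then show ?thesis using False by simp
    qed
    have R1: "cov a E (\<lambda>u w. of_real (1/2) * cnj (f1 u) * f1 w)"
      by (rule cov_state[OF G], rule rank_one_state, simp, subst sum2)
         (use False in \<open>auto simp: f1_def ind_def\<close>)
    have R2: "cov a E (\<lambda>u w. of_real (1/2) * cnj (f2 u) * f2 w)"
      by (rule cov_state[OF G], rule rank_one_state, simp, subst sum2)
         (use False in \<open>auto simp: f2_def ind_def\<close>)
    define c3 where "c3 = - (1 - \<i>) / 2"
    have "cov a E (\<lambda>u w. 1 * (of_real (1/2) * cnj (f1 u) * f1 w) + ((- \<i>) * (of_real (1/2) * cnj (f2 u) * f2 w)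
        + (c3 * (of_real 1 * cnj (ind x u) * ind x w) + (c3 * (of_real 1 * cnj (ind y u) * ind y w) + 0))))"
      by (intro cov_comb[OF lin] R1 R2 Rz cov_zero[OF lin])
    moreover have "(\<lambda>u w. 1 * (of_real (1/2) * cnj (f1 u) * f1 w) + ((- \<i>) * (of_real (1/2) * cnj (f2 u) * f2 w)
        + (c3 * (of_real 1 * cnj (ind x u) * ind x w) + (c3 * (of_real 1 * cnj (ind y u) * ind y w) + 0)))) = eu x y"
      using False by (auto simp: fun_eq_iff eu_def f1_def f2_def ind_def c3_def field_simps)
    ultimately show ?thesis by simp
  qed
qed

lemma cis_eq_all:
  assumes "\<And>t. cis (A * t) = cis (B * t)"
  shows "A = B"
proof (rule ccontr)
  assume ne: "A \<noteq> B"
  define t where "t = pi / (A - B)"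
  have "cis (A * t) / cis (B * t) = 1" using assms[of t] by simp
  then have "cis ((A - B) * t) = 1" by (simp add: cis_divide left_diff_distrib)
  moreover have "(A - B) * t = pi" using ne by (simp add: t_def)
  ultimately show False by simp
qed

lemma cov_unit:
  fixes E :: "('a::finite) op \<Rightarrow> 'a op"
  assumes G: "GPC \<beta> a E" and ne: "E (eu z z') x x' \<noteq> 0"
  shows "a z - a z' = a x - a x'"
proof -
  have lin: "clinear_map E" using G by (simp add: GPC_def quantum_channel_def)
  have "cis (- (a z * t)) * cis (a z' * t) = cis (- (a x * t)) * cis (a x' * t)" for t
  proof -
    have "E (time_evol a t (eu z z')) x x' = time_evol a t (E (eu z z')) x x'"
      using cov_eu[OF G, of z z'] unfolding cov_def by simp
    then have "(cis (- (a z * t)) * cis (a z' * t)) * E (eu z z') x x'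
        = (cis (- (a x * t)) * cis (a x' * t)) * E (eu z z') x x'"
      unfolding time_evol_eu lin_scale[OF lin] by (simp add: time_evol_def algebra_simps)
    then show ?thesis using ne by simp
  qed
  then have "cis ((a z' - a z) * t) = cis ((a x' - a x) * t)" for t
    by (simp add: cis_mult algebra_simps)
  then have "a z' - a z = a x' - a x" by (rule cis_eq_all)
  then show ?thesis by simp
qed



lemma choi:
  fixes E :: "('a::finite) op \<Rightarrow> 'a op"
  assumes cp: "completely_positive E"
  shows "0 \<le> Re (\<Sum>x\<in>UNIV. \<Sum>y\<in>UNIV. \<Sum>x'\<in>UNIV. \<Sum>y'\<in>UNIV. cnj (w x y) * E (eu x x') y y' * w x' y')"
    and "E (eu x' x) y' y = cnj (E (eu x x') y y')"
proof -
  define n where "n = card (UNIV::'a set)"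
  obtain g where g: "bij_betw g {..<n} (UNIV::'a set)"
    using ex_bij_betw_nat_finite[of "UNIV::'a set"] by (auto simp: lessThan_atLeast0 n_def)
  define f where "f = (\<lambda>p::nat \<times> 'a. if snd p = g (fst p) then (1::complex) else 0)"
  define X where "X = (\<lambda>p q. of_real 1 * cnj (f p) * f q)"
  have "psd_on ({..<n} \<times> UNIV) X" unfolding X_def by (rule rank_one_psd_on) simp
  then have Y: "psd_on ({..<n} \<times> UNIV) (\<lambda>(i, x) (j, y). E (\<lambda>x' y'. X (i, x') (j, y')) x y)"
    using cp unfolding completely_positive_def by blast
  have blk: "(\<lambda>x' y'. X (i, x') (j, y')) = eu (g i) (g j)" for i j
    by (auto simp: X_def f_def eu_def fun_eq_iff)
  have Y': "psd_on ({..<n} \<times> UNIV) (\<lambda>p q. E (eu (g (fst p)) (g (fst q))) (snd p) (snd q))"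
  proof -
    have "(\<lambda>(i, x) (j, y). E (\<lambda>x' y'. X (i, x') (j, y')) x y) =
          (\<lambda>p q. E (eu (g (fst p)) (g (fst q))) (snd p) (snd q))"
      by (auto simp: fun_eq_iff blk)
    then show ?thesis using Y by simp
  qed
  have reidx: "(\<Sum>i<n. F (g i)) = (\<Sum>x\<in>UNIV. F x)" for F :: "'a \<Rightarrow> complex"
    using sum.reindex_bij_betw[OF g, of F] .
  define T where "T = (\<lambda>x y x' y'. cnj (w x y) * E (eu x x') y y' * w x' y')"
  have "0 \<le> Re (qform ({..<n} \<times> UNIV) (\<lambda>p q. E (eu (g (fst p)) (g (fst q))) (snd p) (snd q))
          (\<lambda>p. w (g (fst p)) (snd p)))"
    using Y' unfolding psd_on_iff by blast
  also have "qform ({..<n} \<times> UNIV) (\<lambda>p q. E (eu (g (fst p)) (g (fst q))) (snd p) (snd q))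
          (\<lambda>p. w (g (fst p)) (snd p)) = (\<Sum>i<n. \<Sum>y\<in>UNIV. \<Sum>j<n. \<Sum>y'\<in>UNIV. T (g i) y (g j) y')"
    unfolding qform_prod T_def by simp
  also have "\<dots> = (\<Sum>i<n. \<Sum>y\<in>UNIV. \<Sum>x'\<in>UNIV. \<Sum>y'\<in>UNIV. T (g i) y x' y')"
    by (intro sum.cong refl reidx)
  also have "\<dots> = (\<Sum>x\<in>UNIV. \<Sum>y\<in>UNIV. \<Sum>x'\<in>UNIV. \<Sum>y'\<in>UNIV. T x y x' y')"
    by (rule reidx)
  finally show "0 \<le> Re (\<Sum>x\<in>UNIV. \<Sum>y\<in>UNIV. \<Sum>x'\<in>UNIV. \<Sum>y'\<in>UNIV. cnj (w x y) * E (eu x x') y y' * w x' y')"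
    unfolding T_def .
  have gs: "z \<in> g ` {..<n}" for z using g unfolding bij_betw_def by simp
  obtain i where i: "i < n" "g i = x" using gs[of x] by auto
  obtain j where j: "j < n" "g j = x'" using gs[of x'] by auto
  have "(i, y) \<in> {..<n} \<times> UNIV" "(j, y') \<in> {..<n} \<times> UNIV" using i j by auto
  then show "E (eu x' x) y' y = cnj (E (eu x x') y y')"
  proof -
    have h: "\<forall>p\<in>{..<n} \<times> UNIV. \<forall>q\<in>{..<n} \<times> UNIV.
        E (eu (g (fst q)) (g (fst p))) (snd q) (snd p) = cnj (E (eu (g (fst p)) (g (fst q))) (snd p) (snd q))"
      using Y' unfolding psd_on_iff by (rule conjunct1)
    have "E (eu (g (fst (j, y'))) (g (fst (i, y)))) (snd (j, y')) (snd (i, y))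
        = cnj (E (eu (g (fst (i, y))) (g (fst (j, y')))) (snd (i, y)) (snd (j, y')))"
      using bspec[OF bspec[OF h \<open>(i, y) \<in> {..<n} \<times> UNIV\<close>] \<open>(j, y') \<in> {..<n} \<times> UNIV\<close>] .
    then have "E (eu (g j) (g i)) y' y = cnj (E (eu (g i) (g j)) y y')" by simp
    then show ?thesis using i j by simp
  qed
qed



lemma sum_single_nz:
  fixes f :: "'a::finite \<Rightarrow> 'b::comm_monoid_add"
  assumes "\<And>u. u \<noteq> z \<Longrightarrow> f u = 0"
  shows "(\<Sum>u\<in>UNIV. f u) = f z"
proof -
  have "(\<Sum>u\<in>UNIV. f u) = (\<Sum>u\<in>{z}. f u)"
    using assms by (intro sum.mono_neutral_right) auto
  then show ?thesis by simp
qed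

lemma sum4_single:
  fixes w :: "'a::finite \<Rightarrow> 'b::finite \<Rightarrow> complex"
  assumes "\<And>x0 y0. x0 \<noteq> x \<or> y0 \<noteq> y \<Longrightarrow> w x0 y0 = 0"
  shows "(\<Sum>x0\<in>UNIV. \<Sum>y0\<in>UNIV. \<Sum>x1\<in>UNIV. \<Sum>y1\<in>UNIV. cnj (w x0 y0) * T x0 y0 x1 y1 * w x1 y1)
     = cnj (w x y) * T x y x y * w x y"
proof -
  have "(\<Sum>x0\<in>UNIV. \<Sum>y0\<in>UNIV. \<Sum>x1\<in>UNIV. \<Sum>y1\<in>UNIV. cnj (w x0 y0) * T x0 y0 x1 y1 * w x1 y1)
     = (\<Sum>y0\<in>UNIV. \<Sum>x1\<in>UNIV. \<Sum>y1\<in>UNIV. cnj (w x y0) * T x y0 x1 y1 * w x1 y1)"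
    by (rule sum_single_nz) (simp add: assms)
  also have "\<dots> = (\<Sum>x1\<in>UNIV. \<Sum>y1\<in>UNIV. cnj (w x y) * T x y x1 y1 * w x1 y1)"
    by (rule sum_single_nz) (simp add: assms)
  also have "\<dots> = (\<Sum>y1\<in>UNIV. cnj (w x y) * T x y x y1 * w x y1)"
    by (rule sum_single_nz) (simp add: assms)
  also have "\<dots> = cnj (w x y) * T x y x y * w x y"
    by (rule sum_single_nz) (simp add: assms)
  finally show ?thesis .
qed

lemma sum4_diag:
  fixes v :: "'a::finite \<Rightarrow> complex"
  shows "(\<Sum>x0\<in>UNIV. \<Sum>y0\<in>UNIV. \<Sum>x1\<in>UNIV. \<Sum>y1\<in>UNIV.
      cnj (if y0 = x0 then v x0 else 0) * T x0 y0 x1 y1 * (if y1 = x1 then v x1 else 0))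
     = (\<Sum>x0\<in>UNIV. \<Sum>x1\<in>UNIV. cnj (v x0) * T x0 x0 x1 x1 * v x1)"
proof (rule sum.cong[OF refl])
  fix x0
  have "(\<Sum>y0\<in>UNIV. \<Sum>x1\<in>UNIV. \<Sum>y1\<in>UNIV.
      cnj (if y0 = x0 then v x0 else 0) * T x0 y0 x1 y1 * (if y1 = x1 then v x1 else 0))
     = (\<Sum>x1\<in>UNIV. \<Sum>y1\<in>UNIV. cnj (v x0) * T x0 x0 x1 y1 * (if y1 = x1 then v x1 else 0))"
    by (subst sum_single_nz[where z=x0]) auto
  also have "\<dots> = (\<Sum>x1\<in>UNIV. cnj (v x0) * T x0 x0 x1 x1 * v x1)"
  proof (rule sum.cong[OF refl])
    fix x1
    show "(\<Sum>y1\<in>UNIV. cnj (v x0) * T x0 x0 x1 y1 * (if y1 = x1 then v x1 else 0)) =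
      cnj (v x0) * T x0 x0 x1 x1 * v x1"
      by (subst sum_single_nz[where z=x1]) auto
  qed
  finally show "(\<Sum>y0\<in>UNIV. \<Sum>x1\<in>UNIV. \<Sum>y1\<in>UNIV.
      cnj (if y0 = x0 then v x0 else 0) * T x0 y0 x1 y1 * (if y1 = x1 then v x1 else 0))
     = (\<Sum>x1\<in>UNIV. cnj (v x0) * T x0 x0 x1 x1 * v x1)" .
qed

lemma forward:
  fixes E :: "('a::finite) op \<Rightarrow> 'a op"
  assumes bohr: "nondegenerate_bohr a" and G: "GPC \<beta> a E" and Er: "E \<rho> = \<sigma>"
    and rho: "\<forall>x y. x \<noteq> y \<longrightarrow> \<rho> x y \<noteq> 0"
  shows "\<exists>P :: 'a \<Rightarrow> 'a \<Rightarrow> real. column_stochastic P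
       \<and> (\<forall>y. (\<Sum>x\<in>UNIV. complex_of_real (P y x) * \<rho> x x) = \<sigma> y y)
       \<and> (\<forall>y. (\<Sum>x\<in>UNIV. P y x * gibbs_vec \<beta> a x) = gibbs_vec \<beta> a y)
       \<and> psd (\<lambda>x y. if x = y then complex_of_real (P x x) else \<sigma> x y / \<rho> x y)"
proof -
  have lin: "clinear_map E" and cp: "completely_positive E" and tp: "trace_preserving E"
    and gib: "E (gibbs_state \<beta> a) = gibbs_state \<beta> a"
    using G by (auto simp: GPC_def quantum_channel_def)
  have off: "(z = x \<and> z' = x') \<or> (z = z' \<and> x = x')" if "E (eu z z') x x' \<noteq> 0" for z z' x x' :: 'a
    using cov_unit[OF G that] bohr unfolding nondegenerate_bohr_def by blast
  define P where "P = (\<lambda>y x. Re (E (eu x x) y y))"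
  have real: "E (eu x x) y y = of_real (P y x)" for x y
  proof -
    have "E (eu x x) y y = cnj (E (eu x x) y y)" using choi(2)[OF cp, of x x y y] .
    then have "Im (E (eu x x) y y) = 0" by (simp add: complex_eq_iff)
    then show ?thesis by (simp add: P_def complex_eq_iff)
  qed
  have nonneg: "0 \<le> P y x" for x y
  proof -
    define w where "w = (\<lambda>x0 y0. if x0 = x \<and> y0 = y then (1::complex) else 0)"
    have "(\<Sum>x0\<in>UNIV. \<Sum>y0\<in>UNIV. \<Sum>x1\<in>UNIV. \<Sum>y1\<in>UNIV.
        cnj (w x0 y0) * E (eu x0 x1) y0 y1 * w x1 y1) = cnj (w x y) * E (eu x x) y y * w x y"
      by (rule sum4_single) (auto simp: w_def)
    then show ?thesis using choi(1)[OF cp, of w] real[of x y] by (simp add: w_def)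
  qed
  have colsum: "(\<Sum>y\<in>UNIV. P y x) = 1" for x
  proof -
    have "trace (E (eu x x)) = trace (eu x x)" using tp by (simp add: trace_preserving_def)
    also have "\<dots> = 1" by (simp add: trace_def eu_def)
    finally have "(\<Sum>y\<in>UNIV. of_real (P y x)) = (1::complex)" by (simp add: trace_def real)
    then show ?thesis by (metis of_real_eq_1_iff of_real_sum)
  qed
  have expr: "\<sigma> y y' = (\<Sum>z\<in>UNIV. \<Sum>z'\<in>UNIV. \<rho> z z' * E (eu z z') y y')" for y y'
    using E_expand[OF lin, of \<rho> y y'] Er by simp
  have diag: "\<sigma> y y = (\<Sum>x\<in>UNIV. of_real (P y x) * \<rho> x x)" for y
  proof -
    have "\<sigma> y y = (\<Sum>z\<in>UNIV. \<rho> z z * E (eu z z) y y)"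
      unfolding expr
    proof (rule sum.cong[OF refl], rule sum_single_nz)
      fix z u :: 'a assume "u \<noteq> z"
      then have "E (eu z u) y y = 0" using off[of z u y y] by auto
      then show "\<rho> z u * E (eu z u) y y = 0" by simp
    qed
    then show ?thesis by (simp add: real mult.commute)
  qed
  have offd: "\<sigma> y y' = \<rho> y y' * E (eu y y') y y'" if "y \<noteq> y'" for y y'
  proof -
    have "\<sigma> y y' = (\<Sum>z'\<in>UNIV. \<rho> y z' * E (eu y z') y y')"
      unfolding expr
    proof (rule sum_single_nz)
      fix u :: 'a assume "u \<noteq> y"
      have "E (eu u z') y y' = 0" for z' using off[of u z' y y'] \<open>u \<noteq> y\<close> that by auto
      then show "(\<Sum>z'\<in>UNIV. \<rho> u z' * E (eu u z') y y') = 0" by simp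
    qed
    also have "\<dots> = \<rho> y y' * E (eu y y') y y'"
    proof (rule sum_single_nz)
      fix u :: 'a assume "u \<noteq> y'"
      then have "E (eu y u) y y' = 0" using off[of y u y y'] that by auto
      then show "\<rho> y u * E (eu y u) y y' = 0" by simp
    qed
    finally show ?thesis .
  qed
  have gibbs: "(\<Sum>x\<in>UNIV. P y x * gibbs_vec \<beta> a x) = gibbs_vec \<beta> a y" for y
  proof -
    have "of_real (gibbs_vec \<beta> a y) = E (gibbs_state \<beta> a) y y"
      using gib by (simp add: gibbs_state_def)
    also have "\<dots> = (\<Sum>z\<in>UNIV. \<Sum>z'\<in>UNIV. gibbs_state \<beta> a z z' * E (eu z z') y y)"
      by (rule E_expand[OF lin])
    also have "\<dots> = (\<Sum>z\<in>UNIV. gibbs_state \<beta> a z z * E (eu z z) y y)"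
      by (rule sum.cong[OF refl], rule sum_single_nz) (simp add: gibbs_state_def)
    also have "\<dots> = of_real (\<Sum>x\<in>UNIV. P y x * gibbs_vec \<beta> a x)"
      by (simp add: gibbs_state_def real mult.commute)
    finally show ?thesis by (metis of_real_eq_iff)
  qed
  have Neq: "(\<lambda>x y. if x = y then complex_of_real (P x x) else \<sigma> x y / \<rho> x y) = (\<lambda>x x'. E (eu x x') x x')"
    using offd rho by (auto simp: fun_eq_iff real)
  have "psd (\<lambda>x x'. E (eu x x') x x')"
    unfolding psd_def psd_on_iff
  proof (intro conjI ballI allI)
    fix x y :: 'a
    show "E (eu y x) y x = cnj (E (eu x y) x y)" by (rule choi(2)[OF cp])
  next
    fix v :: "'a \<Rightarrow> complex"
    have "qform UNIV (\<lambda>x x'. E (eu x x') x x') v = (\<Sum>x0\<in>UNIV. \<Sum>y0\<in>UNIV. \<Sum>x1\<in>UNIV. \<Sum>y1\<in>UNIV.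
      cnj (if y0 = x0 then v x0 else 0) * E (eu x0 x1) y0 y1 * (if y1 = x1 then v x1 else 0))"
      unfolding sum4_diag qform_def ..
    then show "0 \<le> Re (qform UNIV (\<lambda>x x'. E (eu x x') x x') v)"
      using choi(1)[OF cp, of "\<lambda>x0 y0. if y0 = x0 then v x0 else 0"] by simp
  qed
  then have "psd (\<lambda>x y. if x = y then complex_of_real (P x x) else \<sigma> x y / \<rho> x y)"
    by (simp only: Neq)
  moreover have "column_stochastic P" unfolding column_stochastic_def using nonneg colsum by blast
  moreover have "\<forall>y. (\<Sum>x\<in>UNIV. complex_of_real (P y x) * \<rho> x x) = \<sigma> y y"
    using diag by metis
  ultimately show ?thesis using gibbs by blast
qed



lemma qform_block:
  "qform ({..<k} \<times> (UNIV::'a::finite set)) X (\<lambda>p. if snd p = x then v (fst p) else 0)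
     = (\<Sum>i<k. \<Sum>j<k. cnj (v i) * X (i,x) (j,x) * v j)"
  unfolding qform_prod
proof (rule sum.cong[OF refl])
  fix i
  show "(\<Sum>u\<in>UNIV. \<Sum>j<k. \<Sum>u'\<in>UNIV. cnj (if snd (i, u) = x then v (fst (i, u)) else 0) * X (i, u) (j, u') *
          (if snd (j, u') = x then v (fst (j, u')) else 0)) = (\<Sum>j<k. cnj (v i) * X (i, x) (j, x) * v j)"
    apply (rule trans[OF sum_single_nz[where z = x]])
     apply simp
    apply (rule sum.cong[OF refl])
    apply (rule trans[OF sum_single_nz[where z = x]])
     apply auto
    done
qed

lemma sum_split_at:
  fixes f :: "'a::finite \<Rightarrow> complex"
  shows "(\<Sum>x\<in>UNIV. f x) = (\<Sum>x\<in>UNIV. if x = y then 0 else f x) + f y"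
proof -
  have "(\<Sum>x\<in>UNIV. f x) = (\<Sum>x\<in>UNIV. (if x = y then 0 else f x) + (if x = y then f y else 0))"
    by (rule sum.cong) auto
  then show ?thesis by (simp add: sum.distrib)
qed

lemma sum_pull5:
  "(\<Sum>a\<in>A. \<Sum>b\<in>B. \<Sum>c\<in>C. \<Sum>d\<in>D. \<Sum>l\<in>L. f a b c d l)
    = (\<Sum>l\<in>L. \<Sum>a\<in>A. \<Sum>b\<in>B. \<Sum>c\<in>C. \<Sum>d\<in>D. f a b c d l)"
proof -
  have "(\<Sum>a\<in>A. \<Sum>b\<in>B. \<Sum>c\<in>C. \<Sum>d\<in>D. \<Sum>l\<in>L. f a b c d l)
      = (\<Sum>a\<in>A. \<Sum>b\<in>B. \<Sum>c\<in>C. \<Sum>l\<in>L. \<Sum>d\<in>D. f a b c d l)"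
    by (rule sum.cong[OF refl], rule sum.cong[OF refl], rule sum.cong[OF refl], rule sum.swap)
  also have "\<dots> = (\<Sum>a\<in>A. \<Sum>b\<in>B. \<Sum>l\<in>L. \<Sum>c\<in>C. \<Sum>d\<in>D. f a b c d l)"
    by (rule sum.cong[OF refl], rule sum.cong[OF refl], rule sum.swap)
  also have "\<dots> = (\<Sum>a\<in>A. \<Sum>l\<in>L. \<Sum>b\<in>B. \<Sum>c\<in>C. \<Sum>d\<in>D. f a b c d l)"
    by (rule sum.cong[OF refl], rule sum.swap)
  also have "\<dots> = (\<Sum>l\<in>L. \<Sum>a\<in>A. \<Sum>b\<in>B. \<Sum>c\<in>C. \<Sum>d\<in>D. f a b c d l)"
    by (rule sum.swap)
  finally show ?thesis .
qed

lemma sum_swap4: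
  "(\<Sum>a\<in>A. \<Sum>b\<in>B. \<Sum>c\<in>C. \<Sum>d\<in>D. f a b c d)
    = (\<Sum>b\<in>B. \<Sum>d\<in>D. \<Sum>a\<in>A. \<Sum>c\<in>C. f a b c d)"
proof -
  have "(\<Sum>a\<in>A. \<Sum>b\<in>B. \<Sum>c\<in>C. \<Sum>d\<in>D. f a b c d)
      = (\<Sum>b\<in>B. \<Sum>a\<in>A. \<Sum>c\<in>C. \<Sum>d\<in>D. f a b c d)"
    by (rule sum.swap)
  also have "\<dots> = (\<Sum>b\<in>B. \<Sum>a\<in>A. \<Sum>d\<in>D. \<Sum>c\<in>C. f a b c d)"
    by (rule sum.cong[OF refl], rule sum.cong[OF refl], rule sum.swap)
  also have "\<dots> = (\<Sum>b\<in>B. \<Sum>d\<in>D. \<Sum>a\<in>A. \<Sum>c\<in>C. f a b c d)"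
    by (rule sum.cong[OF refl], rule sum.swap)
  finally show ?thesis .
qed

lemma Re_sum_nonneg:
  "(\<And>x. x \<in> A \<Longrightarrow> 0 \<le> Re (f x)) \<Longrightarrow> 0 \<le> Re (sum f A)"
  by (simp add: Re_sum sum_nonneg)

lemma cp_construct:
  fixes P :: "'a::finite \<Rightarrow> 'a \<Rightarrow> real" and N :: "'a op"
  assumes Pnn: "\<And>x y. 0 \<le> P y x" and Np: "psd N" and Ndiag: "\<And>x. N x x = of_real (P x x)"
  shows "completely_positive (\<lambda>(X::'a op) y y'. if y = y' then (\<Sum>x\<in>UNIV. of_real (P y x) * X x x) else N y y' * X y y')"
  unfolding completely_positive_def
proof (intro allI impI)
  fix k and X :: "nat \<times> 'a \<Rightarrow> nat \<times> 'a \<Rightarrow> complex"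
  assume Xp: "psd_on ({..<k} \<times> UNIV) X"
  define S where "S = {..<k} \<times> (UNIV::'a set)"
  have Xh: "X q p = cnj (X p q)" if "p \<in> S" "q \<in> S" for p q
    using Xp that unfolding psd_on_iff S_def by blast
  have Xf: "0 \<le> Re (qform S X w)" for w using Xp unfolding psd_on_iff S_def by blast
  have Nh: "N y x = cnj (N x y)" for x y using Np unfolding psd_def psd_on_iff by blast
  define c where "c = (\<lambda>y x. if x = y then 0 else P y x)"
  have cx: "of_real (c y x) * Z = (if x = y then 0 else of_real (P y x) * Z)" for x y and Z :: complex
    by (simp add: c_def)
  define Y where "Y = (\<lambda>(i, x) (j, y). (\<lambda>(X::'a op) y y'. if y = y' then (\<Sum>x\<in>UNIV. of_real (P y x) * X x x) else N y y' * X y y')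
        (\<lambda>x' y'. X (i, x') (j, y')) x y)"
  have Yeq: "Y (i, y) (j, y') = (if y = y' then (\<Sum>x\<in>UNIV. of_real (c y x) * X (i, x) (j, x)) else 0)
      + N y y' * X (i, y) (j, y')" for i j y y'
  proof (cases "y = y'")
    case True
    then have [simp]: "y' = y" by simp
    show ?thesis
      using sum_split_at[of "\<lambda>x. of_real (P y x) * X (i, x) (j, x)" y]
      by (simp add: Y_def cx Ndiag)
  next
    case False then show ?thesis by (simp add: Y_def)
  qed
  show "psd_on ({..<k} \<times> UNIV) Y"
    unfolding psd_on_iff S_def[symmetric]
  proof (intro conjI ballI allI)
    fix p q assume p: "p \<in> S" and q: "q \<in> S"
    obtain i y where pe: "p = (i, y)" by (cases p)
    obtain j y' where qe: "q = (j, y')" by (cases q)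
    have ik: "(i, x) \<in> S" "(j, x) \<in> S" for x using p q pe qe by (auto simp: S_def)
    show "Y q p = cnj (Y p q)"
    proof (cases "y = y'")
      case True
      have "(\<Sum>x\<in>UNIV. of_real (c y x) * X (j, x) (i, x)) = cnj (\<Sum>x\<in>UNIV. of_real (c y x) * X (i, x) (j, x))"
        by (simp add: Xh[OF ik(1) ik(2)])
      then show ?thesis using True pe qe Yeq Xh[OF ik(1)[of y'] ik(2)[of y']] by (simp add: Ndiag)
    next
      case False
      then show ?thesis using pe qe Yeq Xh[OF p q] Nh[of y y'] by simp
    qed
  next
    fix v :: "nat \<times> 'a \<Rightarrow> complex"
    have "qform S Y v = (\<Sum>i<k. \<Sum>y\<in>UNIV. \<Sum>j<k. \<Sum>y'\<in>UNIV.
        cnj (v (i, y)) * (if y = y' then (\<Sum>x\<in>UNIV. of_real (c y x) * X (i, x) (j, x)) else 0) * v (j, y'))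
      + (\<Sum>i<k. \<Sum>y\<in>UNIV. \<Sum>j<k. \<Sum>y'\<in>UNIV. cnj (v (i, y)) * (N y y' * X (i, y) (j, y')) * v (j, y'))"
      unfolding S_def qform_prod Yeq by (simp add: sum.distrib algebra_simps)
    moreover have "0 \<le> Re (\<Sum>i<k. \<Sum>y\<in>UNIV. \<Sum>j<k. \<Sum>y'\<in>UNIV.
        cnj (v (i, y)) * (if y = y' then (\<Sum>x\<in>UNIV. of_real (c y x) * X (i, x) (j, x)) else 0) * v (j, y'))"
    proof -
      have "(\<Sum>i<k. \<Sum>y\<in>UNIV. \<Sum>j<k. \<Sum>y'\<in>UNIV.
        cnj (v (i, y)) * (if y = y' then (\<Sum>x\<in>UNIV. of_real (c y x) * X (i, x) (j, x)) else 0) * v (j, y'))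
        = (\<Sum>i<k. \<Sum>y\<in>UNIV. \<Sum>j<k. cnj (v (i, y)) * (\<Sum>x\<in>UNIV. of_real (c y x) * X (i, x) (j, x)) * v (j, y))"
        apply (rule sum.cong[OF refl])+
        apply (rule trans[OF sum_single_nz])
         apply auto
        done
      also have "\<dots> = (\<Sum>i<k. \<Sum>y\<in>UNIV. \<Sum>j<k. \<Sum>x\<in>UNIV. of_real (c y x) * (cnj (v (i, y)) * X (i, x) (j, x) * v (j, y)))"
        by (simp add: sum_distrib_left sum_distrib_right ac_simps)
      also have "\<dots> = (\<Sum>y\<in>UNIV. \<Sum>x\<in>UNIV. \<Sum>i<k. \<Sum>j<k. of_real (c y x) * (cnj (v (i, y)) * X (i, x) (j, x) * v (j, y)))"
        by (rule sum_swap4)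
      also have "\<dots> = (\<Sum>y\<in>UNIV. \<Sum>x\<in>UNIV. of_real (c y x) * qform S X (\<lambda>p. if snd p = x then v (fst p, y) else 0))"
        apply (rule sum.cong[OF refl], rule sum.cong[OF refl])
        subgoal for y x using qform_block[of k X x "\<lambda>i. v (i, y)"] by (simp add: S_def sum_distrib_left)
        done
      finally have eq: "(\<Sum>i<k. \<Sum>y\<in>UNIV. \<Sum>j<k. \<Sum>y'\<in>UNIV.
        cnj (v (i, y)) * (if y = y' then (\<Sum>x\<in>UNIV. of_real (c y x) * X (i, x) (j, x)) else 0) * v (j, y'))
        = (\<Sum>y\<in>UNIV. \<Sum>x\<in>UNIV. of_real (c y x) * qform S X (\<lambda>p. if snd p = x then v (fst p, y) else 0))" .
      have cnn: "0 \<le> c y x" for y x using Pnn by (simp add: c_def)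
      show ?thesis unfolding eq
        by (intro Re_sum_nonneg) (simp add: cnn Xf)
    qed
    moreover have "0 \<le> Re (\<Sum>i<k. \<Sum>y\<in>UNIV. \<Sum>j<k. \<Sum>y'\<in>UNIV. cnj (v (i, y)) * (N y y' * X (i, y) (j, y')) * v (j, y'))"
    proof -
      obtain n and d :: "nat \<Rightarrow> real" and U where dnn: "\<forall>l. 0 \<le> d l"
        and NU: "\<forall>x\<in>UNIV. \<forall>y\<in>UNIV. N x y = (\<Sum>l<n. of_real (d l) * cnj (U l x) * U l y)"
        using psd_decomp[of UNIV N] Np unfolding psd_def by auto
      have "(\<Sum>i<k. \<Sum>y\<in>UNIV. \<Sum>j<k. \<Sum>y'\<in>UNIV. cnj (v (i, y)) * (N y y' * X (i, y) (j, y')) * v (j, y'))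
        = (\<Sum>i<k. \<Sum>y\<in>UNIV. \<Sum>j<k. \<Sum>y'\<in>UNIV. \<Sum>l<n. of_real (d l) *
             (cnj (U l y * v (i, y)) * X (i, y) (j, y') * (U l y' * v (j, y'))))"
        using NU by (simp add: sum_distrib_left sum_distrib_right ac_simps)
      also have "\<dots> = (\<Sum>l<n. \<Sum>i<k. \<Sum>y\<in>UNIV. \<Sum>j<k. \<Sum>y'\<in>UNIV. of_real (d l) *
             (cnj (U l y * v (i, y)) * X (i, y) (j, y') * (U l y' * v (j, y'))))"
        by (rule sum_pull5)
      also have "\<dots> = (\<Sum>l<n. of_real (d l) * qform S X (\<lambda>p. U l (snd p) * v p))"
        unfolding S_def qform_prod by (simp add: sum_distrib_left)
      finally have eq: "(\<Sum>i<k. \<Sum>y\<in>UNIV. \<Sum>j<k. \<Sum>y'\<in>UNIV. cnj (v (i, y)) * (N y y' * X (i, y) (j, y')) * v (j, y'))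
        = (\<Sum>l<n. of_real (d l) * qform S X (\<lambda>p. U l (snd p) * v p))" .
      show ?thesis unfolding eq
        by (intro Re_sum_nonneg) (simp add: dnn Xf)
    qed
    ultimately show "0 \<le> Re (qform S Y v)" by simp
  qed
qed

lemma backward:
  fixes a :: "'a::finite \<Rightarrow> real" and \<rho> \<sigma> :: "'a op" and P :: "'a \<Rightarrow> 'a \<Rightarrow> real"
  assumes rho: "\<forall>x y. x \<noteq> y \<longrightarrow> \<rho> x y \<noteq> 0"
    and cs: "column_stochastic P"
    and dg: "\<forall>y. (\<Sum>x\<in>UNIV. complex_of_real (P y x) * \<rho> x x) = \<sigma> y y"
    and gb: "\<forall>y. (\<Sum>x\<in>UNIV. P y x * gibbs_vec \<beta> a x) = gibbs_vec \<beta> a y"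
    and Np: "psd (\<lambda>x y. if x = y then complex_of_real (P x x) else \<sigma> x y / \<rho> x y)"
  shows "\<exists>E. GPC \<beta> a E \<and> E \<rho> = \<sigma>"
proof -
  define N where "N = (\<lambda>x y. if x = y then complex_of_real (P x x) else \<sigma> x y / \<rho> x y)"
  define E where "E = (\<lambda>(X::'a op) y y'. if y = y' then (\<Sum>x\<in>UNIV. of_real (P y x) * X x x) else N y y' * X y y')"
  have lin: "clinear_map E" unfolding clinear_map_def E_def
    by (auto simp: fun_eq_iff sum.distrib sum_distrib_left algebra_simps)
  have tp: "trace_preserving E"
    unfolding trace_preserving_def trace_def
  proof
    fix X :: "'a op"
    have "(\<Sum>y\<in>UNIV. E X y y) = (\<Sum>y\<in>UNIV. \<Sum>x\<in>UNIV. of_real (P y x) * X x x)" by (simp add: E_def)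
    also have "\<dots> = (\<Sum>x\<in>UNIV. \<Sum>y\<in>UNIV. of_real (P y x) * X x x)" by (rule sum.swap)
    also have "\<dots> = (\<Sum>x\<in>UNIV. of_real (\<Sum>y\<in>UNIV. P y x) * X x x)" by (simp add: sum_distrib_right)
    also have "\<dots> = (\<Sum>x\<in>UNIV. X x x)" using cs by (simp add: column_stochastic_def)
    finally show "(\<Sum>y\<in>UNIV. E X y y) = (\<Sum>x\<in>UNIV. X x x)" .
  qed
  have gib: "E (gibbs_state \<beta> a) = gibbs_state \<beta> a"
  proof (intro ext)
    fix y y'
    show "E (gibbs_state \<beta> a) y y' = gibbs_state \<beta> a y y'"
    proof (cases "y = y'")
      case True
      have "(\<Sum>x\<in>UNIV. of_real (P y x) * gibbs_state \<beta> a x x) = of_real (\<Sum>x\<in>UNIV. P y x * gibbs_vec \<beta> a x)"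
        by (simp add: gibbs_state_def)
      then show ?thesis using True gb by (simp add: E_def gibbs_state_def)
    next
      case False then show ?thesis by (simp add: E_def gibbs_state_def)
    qed
  qed
  have cz: "cis (- th) * z * cis th = z" for th z
  proof -
    have "cis (- th) * z * cis th = z * (cis (- th) * cis th)" by (simp add: ac_simps)
    also have "cis (- th) * cis th = 1" by (simp add: cis_mult)
    finally show ?thesis by simp
  qed
  have cov: "E (time_evol a t X) = time_evol a t (E X)" for t X
  proof (intro ext)
    fix y y'
    show "E (time_evol a t X) y y' = time_evol a t (E X) y y'"
    proof (cases "y = y'")
      case True then show ?thesis by (simp add: E_def time_evol_def cz)
    next
      case False then show ?thesis by (simp add: E_def time_evol_def ac_simps)
    qed
  qed
  have Er: "E \<rho> = \<sigma>"
  proof (intro ext)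
    fix y y'
    show "E \<rho> y y' = \<sigma> y y'"
    proof (cases "y = y'")
      case True then show ?thesis using dg by (simp add: E_def)
    next
      case False then show ?thesis using rho by (simp add: E_def N_def)
    qed
  qed
  have Pnn: "\<And>x y. 0 \<le> P y x" using cs by (simp add: column_stochastic_def)
  have cp: "completely_positive E"
    unfolding E_def by (rule cp_construct[OF Pnn]) (use Np in \<open>simp_all add: N_def\<close>)
  have "GPC \<beta> a E"
    unfolding GPC_def quantum_channel_def using lin cp tp gib cov by blast
  then show ?thesis using Er by blast
qed

theorem lemma5:
  fixes a :: "'a::finite \<Rightarrow> real" and \<beta> :: real and \<rho> \<sigma> :: "'a op"
  assumes "nondegenerate_bohr a"
    and "\<beta> > 0"
    and "is_state \<rho>" and "is_state \<sigma>"
    and "\<forall>x y. x \<noteq> y \<longrightarrow> \<rho> x y \<noteq> 0"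
  shows "(\<exists>E. GPC \<beta> a E \<and> E \<rho> = \<sigma>) \<longleftrightarrow>
    (\<exists>P :: 'a \<Rightarrow> 'a \<Rightarrow> real. column_stochastic P
       \<and> (\<forall>y. (\<Sum>x\<in>UNIV. complex_of_real (P y x) * \<rho> x x) = \<sigma> y y)
       \<and> (\<forall>y. (\<Sum>x\<in>UNIV. P y x * gibbs_vec \<beta> a x) = gibbs_vec \<beta> a y)
       \<and> psd (\<lambda>x y. if x = y then complex_of_real (P x x) else \<sigma> x y / \<rho> x y))"
proof
  assume "\<exists>E. GPC \<beta> a E \<and> E \<rho> = \<sigma>"
  then obtain E where "GPC \<beta> a E" "E \<rho> = \<sigma>" by blast
  then show "\<exists>P :: 'a \<Rightarrow> 'a \<Rightarrow> real. column_stochastic P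
       \<and> (\<forall>y. (\<Sum>x\<in>UNIV. complex_of_real (P y x) * \<rho> x x) = \<sigma> y y)
       \<and> (\<forall>y. (\<Sum>x\<in>UNIV. P y x * gibbs_vec \<beta> a x) = gibbs_vec \<beta> a y)
       \<and> psd (\<lambda>x y. if x = y then complex_of_real (P x x) else \<sigma> x y / \<rho> x y)"
    using forward[OF assms(1)] assms(5) by blast
next
  assume "\<exists>P :: 'a \<Rightarrow> 'a \<Rightarrow> real. column_stochastic P
       \<and> (\<forall>y. (\<Sum>x\<in>UNIV. complex_of_real (P y x) * \<rho> x x) = \<sigma> y y)
       \<and> (\<forall>y. (\<Sum>x\<in>UNIV. P y x * gibbs_vec \<beta> a x) = gibbs_vec \<beta> a y)
       \<and> psd (\<lambda>x y. if x = y then complex_of_real (P x x) else \<sigma> x y / \<rho> x y)"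
  then obtain P :: "'a \<Rightarrow> 'a \<Rightarrow> real" where "column_stochastic P"
       "\<forall>y. (\<Sum>x\<in>UNIV. complex_of_real (P y x) * \<rho> x x) = \<sigma> y y"
       "\<forall>y. (\<Sum>x\<in>UNIV. P y x * gibbs_vec \<beta> a x) = gibbs_vec \<beta> a y"
       "psd (\<lambda>x y. if x = y then complex_of_real (P x x) else \<sigma> x y / \<rho> x y)" by blast
  then show "\<exists>E. GPC \<beta> a E \<and> E \<rho> = \<sigma>"
    using backward[OF assms(5)] by blast
qed


end
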